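(* Let $X$ be a real Banach space, $\varepsilon>0$, $A\subseteq X$ bounded, nonempty and non-$\varepsilon$-dentable, and $C=\overline{\operatorname{co}}(A)$. Let $S_0$ be a slice of $C$, $D\subseteq C$ with $\alpha(D)<\varepsilon$, and $\gamma\in(0,1)$. Let $\mathcal S(S_0,D)$ be the collection of all slices $S$ of $C$ with $S\subseteq S_0\setminus D$, and let $\Lambda=\Lambda(S_0,D,\gamma)$ be the union of all $\gamma$-shallow parallels $S^\gamma$ of slices $S\in\mathcal S(S_0,D)$. Then $$C=\overline{\operatorname{co}}\big((C\setminus S_0)\cup(\Lambda\cap A)\big).$$
   Context: $\overline{\operatorname{co}}$ is the norm-closed convex hull. The Kuratowski measure of noncompactness $\alpha(E)$ is the infimum of all $\varepsilon>0$ such that $E$ can be covered by finitely many sets of diameter at most $\varepsilon$. For bounded nonempty $E\subseteq X$, $f$ in the closed unit ball of $X^*$ and $\delta>0$, the slice $S(f,E,\delta)=\{e\in E: f(e)>\sup f(E)-\delta\}$; a slice of $E$ is any set of this form. A bounded set is non-$\varepsilon$-dentable if every slice has diameter $>\varepsilon$. For $\gamma\in(0,1)$ and a slice $S=S(f,C,\delta)$ of $C$ (taken with a defining pair $(f,\delta)$; all such representations are included), its $\gamma$-shallow parallel is $S^\gamma=S(f,C,\gamma\delta/2)$. *)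

theory Defs
  imports "HOL-Analysis.Analysis"
begin

definition slice :: "('a::real_normed_vector \<Rightarrow>\<^sub>L real) \<Rightarrow> 'a set \<Rightarrow> real \<Rightarrow> 'a set" where
  "slice f E \<delta> = {e \<in> E. blinfun_apply f e > (SUP x\<in>E. blinfun_apply f x) - \<delta>}"

definition is_slice :: "'a::real_normed_vector set \<Rightarrow> 'a set \<Rightarrow> bool" where
  "is_slice S E \<longleftrightarrow> (\<exists>f \<delta>. norm f \<le> 1 \<and> \<delta> > 0 \<and> S = slice f E \<delta>)"

definition non_dentable :: "real \<Rightarrow> 'a::real_normed_vector set \<Rightarrow> bool" where
  "non_dentable \<epsilon> E \<longleftrightarrow> (\<forall>S. is_slice S E \<longrightarrow> diameter S > \<epsilon>)"

definition kuratowski :: "'a::real_normed_vector set \<Rightarrow> real" where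
  "kuratowski E = Inf {e. e > 0 \<and> (\<exists>F. finite F \<and> E \<subseteq> \<Union>F \<and> (\<forall>T\<in>F. bounded T \<and> diameter T \<le> e))}"

text \<open>Lambda(S0,D,gamma): union of the gamma-shallow parallels slice f C (gamma*delta/2) over all
  representations (f,delta) of slices of C contained in S0 - D.\<close>
definition shallow_union :: "'a::real_normed_vector set \<Rightarrow> 'a set \<Rightarrow> 'a set \<Rightarrow> real \<Rightarrow> 'a set" where
  "shallow_union C S0 D \<gamma> = \<Union>{slice f C (\<gamma> * \<delta> / 2) | f \<delta>.
      norm f \<le> 1 \<and> \<delta> > 0 \<and> slice f C \<delta> \<subseteq> S0 - D}"

end

theory Submission
  imports Defs
begin

lemma hb:
  fixes p :: "'a::real_vector \<Rightarrow> real"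
  assumes sub: "\<And>x y. p (x + y) \<le> p x + p y"
    and hom: "\<And>c x. c > 0 \<Longrightarrow> p (c *\<^sub>R x) = c * p x"
  shows "\<exists>f. (\<forall>x y. f (x + y) = f x + f y) \<and> (\<forall>r x. f (r *\<^sub>R x) = r * f x) \<and> (\<forall>x. f x \<le> p x)"
proof -
  define ok where "ok G \<longleftrightarrow> (\<forall>x a y b. (x,a) \<in> G \<longrightarrow> (y,b) \<in> G \<longrightarrow> (x+y, a+b) \<in> G)
     \<and> (\<forall>x a r. (x,a) \<in> G \<longrightarrow> (r *\<^sub>R x, r*a) \<in> G)
     \<and> (\<forall>x a b. (x,a) \<in> G \<longrightarrow> (x,b) \<in> G \<longrightarrow> a = b)
     \<and> (\<forall>x a. (x,a) \<in> G \<longrightarrow> a \<le> p x)" for G :: "('a \<times> real) set"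
  have ok1: "\<And>G x a y b. ok G \<Longrightarrow> (x,a)\<in>G \<Longrightarrow> (y,b)\<in>G \<Longrightarrow> (x+y,a+b)\<in>G"
    and ok2: "\<And>G x a r. ok G \<Longrightarrow> (x,a)\<in>G \<Longrightarrow> (r *\<^sub>R x, r*a)\<in>G"
    and ok3: "\<And>G x a b. ok G \<Longrightarrow> (x,a)\<in>G \<Longrightarrow> (x,b)\<in>G \<Longrightarrow> a = b"
    and ok4: "\<And>G x a. ok G \<Longrightarrow> (x,a)\<in>G \<Longrightarrow> a \<le> p x"
    unfolding ok_def by meson+
  have p0: "p 0 = 0" using hom[of 2 0] by simp
  have chain: "\<forall>Ch\<in>chains {G. ok G}. \<Union>Ch \<in> {G. ok G}"
  proof
    fix Ch assume Ch: "Ch \<in> chains {G. ok G}"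
    have okC: "\<And>G. G \<in> Ch \<Longrightarrow> ok G" using chainsD2[OF Ch] by auto
    have two: "\<exists>G\<in>Ch. u \<in> G \<and> v \<in> G" if uv: "u \<in> \<Union>Ch" "v \<in> \<Union>Ch" for u v
    proof -
      obtain G H where GH: "G\<in>Ch" "H\<in>Ch" "u\<in>G" "v\<in>H" using uv by auto
      then have "G \<subseteq> H \<or> H \<subseteq> G" using chainsD[OF Ch] by blast
      then show ?thesis using GH by blast
    qed
    show "\<Union>Ch \<in> {G. ok G}"
      unfolding mem_Collect_eq ok_def
    proof (intro conjI allI impI)
      fix x a y b assume "(x,a) \<in> \<Union>Ch" "(y,b) \<in> \<Union>Ch"
      then obtain G where "G\<in>Ch" "(x,a)\<in>G" "(y,b)\<in>G" using two by blast
      then show "(x+y,a+b) \<in> \<Union>Ch" using ok1[OF okC[of G]] by blast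
    next
      fix x a r assume "(x,a) \<in> \<Union>Ch"
      then obtain G where "G\<in>Ch" "(x,a)\<in>G" by blast
      then show "(r *\<^sub>R x, r*a) \<in> \<Union>Ch" using ok2[OF okC[of G]] by blast
    next
      fix x a b assume "(x,a) \<in> \<Union>Ch" "(x,b) \<in> \<Union>Ch"
      then obtain G where "G\<in>Ch" "(x,a)\<in>G" "(x,b)\<in>G" using two by blast
      then show "a = b" using ok3[OF okC[of G]] by blast
    next
      fix x a assume "(x,a) \<in> \<Union>Ch"
      then obtain G where "G\<in>Ch" "(x,a)\<in>G" by blast
      then show "a \<le> p x" using ok4[OF okC[of G]] by blast
    qed
  qed
  obtain M where okM: "ok M" and maxM: "\<And>G. ok G \<Longrightarrow> M \<subseteq> G \<Longrightarrow> G = M"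
    using Zorn_Lemma[OF chain] by auto
  have addM: "\<And>x a y b. (x,a) \<in> M \<Longrightarrow> (y,b) \<in> M \<Longrightarrow> (x+y, a+b) \<in> M"
    and scM: "\<And>x a r. (x,a) \<in> M \<Longrightarrow> (r *\<^sub>R x, r*a) \<in> M"
    and unM: "\<And>x a b. (x,a) \<in> M \<Longrightarrow> (x,b) \<in> M \<Longrightarrow> a = b"
    and domM: "\<And>x a. (x,a) \<in> M \<Longrightarrow> a \<le> p x"
    using ok1[OF okM] ok2[OF okM] ok3[OF okM] ok4[OF okM] by blast+
  have ok0: "ok {(0,0)}" unfolding ok_def using p0 by auto
  have M0: "(0,0) \<in> M"
  proof (cases "M = {}")
    case True
    then have "{(0,0)} = M" using maxM[OF ok0] by blast
    then show ?thesis by blast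
  next
    case False
    then obtain x a where "(x,a) \<in> M" by auto
    from scM[OF this, of 0] show ?thesis by simp
  qed
  have total: "\<exists>a. (y,a) \<in> M" for y
  proof (rule ccontr)
    assume ny: "\<not> (\<exists>a. (y,a) \<in> M)"
    define L where "L = {a - p (x - y) | x a. (x,a) \<in> M}"
    have key: "l \<le> p (x' + y) - a'" if "l \<in> L" "(x',a') \<in> M" for l x' a'
    proof -
      obtain x a where l: "l = a - p (x - y)" "(x,a) \<in> M" using \<open>l \<in> L\<close> unfolding L_def by blast
      have "a + a' \<le> p (x + x')" using domM[OF addM[OF l(2) that(2)]] .
      also have "\<dots> \<le> p (x - y) + p (x' + y)" using sub[of "x - y" "x' + y"] by simp
      finally show ?thesis using l by simp
    qed
    have Lne: "L \<noteq> {}" unfolding L_def using M0 by blast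
    have Lbdd: "bdd_above L" using key[OF _ M0] by (intro bdd_aboveI[of L "p y"]) simp
    define c where "c = Sup L"
    have cup: "c \<le> p (x' + y) - a'" if "(x',a') \<in> M" for x' a'
      unfolding c_def using key[OF _ that] Lne by (intro cSup_least) auto
    have clow: "a - p (x - y) \<le> c" if "(x,a) \<in> M" for x a
      unfolding c_def using that Lbdd by (intro cSup_upper) (auto simp: L_def)
    define M' where "M' = {(x + t *\<^sub>R y, a + t * c) | x a t. (x,a) \<in> M}"
    have "ok M'"
      unfolding ok_def
    proof (intro conjI allI impI)
      fix x a z b assume "(x,a) \<in> M'" "(z,b) \<in> M'"
      then obtain x1 a1 t1 x2 a2 t2 where e: "x = x1 + t1 *\<^sub>R y" "a = a1 + t1 * c" "(x1,a1)\<in>M"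
        "z = x2 + t2 *\<^sub>R y" "b = a2 + t2 * c" "(x2,a2)\<in>M" unfolding M'_def by blast
      have "(x + z, a + b) = ((x1 + x2) + (t1 + t2) *\<^sub>R y, (a1 + a2) + (t1 + t2) * c)"
        using e by (simp add: algebra_simps scaleR_add_left)
      then show "(x + z, a + b) \<in> M'" unfolding M'_def using addM[OF e(3) e(6)] by blast
    next
      fix x a r assume "(x,a) \<in> M'"
      then obtain x1 a1 t1 where e: "x = x1 + t1 *\<^sub>R y" "a = a1 + t1 * c" "(x1,a1)\<in>M"
        unfolding M'_def by blast
      have "(r *\<^sub>R x, r * a) = (r *\<^sub>R x1 + (r * t1) *\<^sub>R y, r * a1 + (r * t1) * c)"
        using e by (simp add: algebra_simps)
      then show "(r *\<^sub>R x, r * a) \<in> M'" unfolding M'_def using scM[OF e(3)] by blast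
    next
      fix x a b assume "(x,a) \<in> M'" "(x,b) \<in> M'"
      then obtain x1 a1 t1 x2 a2 t2 where e: "x = x1 + t1 *\<^sub>R y" "a = a1 + t1 * c" "(x1,a1)\<in>M"
        "x = x2 + t2 *\<^sub>R y" "b = a2 + t2 * c" "(x2,a2)\<in>M" unfolding M'_def by blast
      have t: "t1 = t2"
      proof (rule ccontr)
        assume ne: "t1 \<noteq> t2"
        have d: "(x1 + (-1) *\<^sub>R x2, a1 + (-1) * a2) \<in> M"
          using addM[OF e(3) scM[OF e(6), of "-1"]] .
        have "x1 - x2 = (t2 - t1) *\<^sub>R y" using e(1) e(4) by (simp add: algebra_simps)
        then have "y = (1 / (t2 - t1)) *\<^sub>R (x1 + (-1) *\<^sub>R x2)" using ne by simp
        then show False using scM[OF d, of "1 / (t2 - t1)"] ny by metis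
      qed
      then have "x1 = x2" using e by simp
      then have "a1 = a2" using unM e(3) e(6) by blast
      then show "a = b" using e t by simp
    next
      fix x a assume "(x,a) \<in> M'"
      then obtain x1 a1 t where e: "x = x1 + t *\<^sub>R y" "a = a1 + t * c" "(x1,a1)\<in>M"
        unfolding M'_def by blast
      show "a \<le> p x"
      proof (cases t "0::real" rule: linorder_cases)
        case equal then show ?thesis using e domM by simp
      next
        case greater
        have m: "((1/t) *\<^sub>R x1, (1/t) * a1) \<in> M" using scM[OF e(3)] .
        have "c \<le> p ((1/t) *\<^sub>R x1 + y) - (1/t) * a1" using cup[OF m] .
        then have "t * c \<le> t * (p ((1/t) *\<^sub>R x1 + y) - (1/t) * a1)"
          using greater by (intro mult_left_mono) auto
        also have "\<dots> = t * p ((1/t) *\<^sub>R x1 + y) - a1"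
          using greater by (simp add: right_diff_distrib)
        also have "t * p ((1/t) *\<^sub>R x1 + y) = p (t *\<^sub>R ((1/t) *\<^sub>R x1 + y))"
          by (rule hom[OF greater, symmetric])
        also have "t *\<^sub>R ((1/t) *\<^sub>R x1 + y) = x" using greater e(1) by (simp add: algebra_simps)
        finally show ?thesis using e(2) by simp
      next
        case less
        define s where "s = - t"
        have s: "s > 0" using less s_def by simp
        have m: "((1/s) *\<^sub>R x1, (1/s) * a1) \<in> M" using scM[OF e(3)] .
        have "(1/s) * a1 - p ((1/s) *\<^sub>R x1 - y) \<le> c" using clow[OF m] .
        then have "s * ((1/s) * a1 - p ((1/s) *\<^sub>R x1 - y)) \<le> s * c"
          using s by (intro mult_left_mono) auto
        moreover have "s * ((1/s) * a1 - p ((1/s) *\<^sub>R x1 - y)) = a1 - s * p ((1/s) *\<^sub>R x1 - y)"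
          using s by (simp add: right_diff_distrib)
        moreover have "s * p ((1/s) *\<^sub>R x1 - y) = p (s *\<^sub>R ((1/s) *\<^sub>R x1 - y))"
          by (rule hom[OF s, symmetric])
        moreover have "s *\<^sub>R ((1/s) *\<^sub>R x1 - y) = x" using s e(1) s_def by (simp add: algebra_simps)
        ultimately show ?thesis using e(2) s_def by simp
      qed
    qed
    moreover have "M \<subseteq> M'"
    proof
      fix u assume "u \<in> M"
      then obtain x a where "u = (x,a)" "(x,a) \<in> M" by (cases u) auto
      then show "u \<in> M'" unfolding M'_def by (intro CollectI exI[of _ x] exI[of _ a] exI[of _ 0]) simp
    qed
    ultimately have "M' = M" using maxM by blast
    moreover have "(y, c) \<in> M'" unfolding M'_def using M0
      by (intro CollectI exI[of _ 0] exI[of _ 0] exI[of _ 1]) simp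
    ultimately show False using ny by blast
  qed
  define f where "f y = (THE a. (y,a) \<in> M)" for y
  have fM: "(y, f y) \<in> M" for y
  proof -
    obtain a where a: "(y,a) \<in> M" using total by blast
    then have "f y = a" unfolding f_def using unM by (intro the_equality) auto
    then show ?thesis using a by simp
  qed
  show ?thesis
  proof (intro exI[of _ f] conjI allI)
    fix x z show "f (x + z) = f x + f z" using unM[OF fM addM[OF fM fM]] .
  next
    fix r x show "f (r *\<^sub>R x) = r * f x" using unM[OF fM scM[OF fM]] .
  next
    fix x show "f x \<le> p x" using domM[OF fM] .
  qed
qed


lemma sep:
  fixes K :: "'a::real_normed_vector set"
  assumes cK: "convex K" and d: "d > 0" and far: "\<forall>k\<in>K. d \<le> norm (k - x)"
  shows "\<exists>h::'a \<Rightarrow>\<^sub>L real. norm h \<le> 1 \<and> (\<forall>k\<in>K. blinfun_apply h k \<le> blinfun_apply h x - d)"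
proof (cases "K = {}")
  case True
  then show ?thesis by (intro exI[of _ 0]) auto
next
  case False
  then obtain k0 where k0: "k0 \<in> K" by auto
  define S where "S y = {norm (y - l *\<^sub>R (k - x)) - l * d | l k. l \<ge> 0 \<and> k \<in> K}" for y
  define p where "p y = Inf (S y)" for y
  have Sne: "S y \<noteq> {}" for y unfolding S_def using k0 by blast
  have Slow: "- norm y \<le> s" if sS: "s \<in> S y" for s y
  proof -
    obtain l k where s: "s = norm (y - l *\<^sub>R (k - x)) - l * d" "l \<ge> 0" "k \<in> K"
      using sS unfolding S_def by blast
    have "l * d \<le> l * norm (k - x)" using far s by (intro mult_left_mono) auto
    also have "\<dots> = norm (l *\<^sub>R (k - x))" using s by simp
    also have "\<dots> \<le> norm (y - l *\<^sub>R (k - x)) + norm y"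
      using norm_triangle_ineq4[of y "y - l *\<^sub>R (k - x)"] by (simp add: norm_minus_commute)
    finally show ?thesis using s by simp
  qed
  have Sbdd: "bdd_below (S y)" for y using Slow by (intro bdd_belowI[of _ "- norm y"]) auto
  have pl: "p y \<le> s" if "s \<in> S y" for s y unfolding p_def using that Sbdd by (rule cInf_lower)
  have pg: "c \<le> p y" if "\<And>s. s \<in> S y \<Longrightarrow> c \<le> s" for c y unfolding p_def using Sne that by (rule cInf_greatest)
  have pnorm: "p y \<le> norm y" for y
  proof -
    have "norm (y - 0 *\<^sub>R (k0 - x)) - 0 * d \<in> S y" unfolding S_def using k0 by blast
    from pl[OF this] show ?thesis by simp
  qed
  have sub: "p (y1 + y2) \<le> p y1 + p y2" for y1 y2
  proof -
    have "p (y1 + y2) \<le> s1 + s2" if s1: "s1 \<in> S y1" and s2: "s2 \<in> S y2" for s1 s2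
    proof -
      obtain l1 k1 where e1: "s1 = norm (y1 - l1 *\<^sub>R (k1 - x)) - l1 * d" "l1 \<ge> 0" "k1 \<in> K"
        using s1 unfolding S_def by blast
      obtain l2 k2 where e2: "s2 = norm (y2 - l2 *\<^sub>R (k2 - x)) - l2 * d" "l2 \<ge> 0" "k2 \<in> K"
        using s2 unfolding S_def by blast
      show ?thesis
      proof (cases "l1 + l2 = 0")
        case True
        then have "l1 = 0" "l2 = 0" using e1 e2 by auto
        then have "norm (y1 + y2 - 0 *\<^sub>R (k1 - x)) - 0 * d \<in> S (y1 + y2)"
          unfolding S_def using e1 by blast
        then have "p (y1 + y2) \<le> norm (y1 + y2)" using pl by fastforce
        also have "\<dots> \<le> s1 + s2" using e1 e2 \<open>l1 = 0\<close> \<open>l2 = 0\<close> by (simp add: norm_triangle_ineq)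
        finally show ?thesis .
      next
        case False
        define l where "l = l1 + l2"
        have lpos: "l > 0" using False e1 e2 l_def by auto
        define k where "k = (l1 / l) *\<^sub>R k1 + (l2 / l) *\<^sub>R k2"
        have kK: "k \<in> K" unfolding k_def using cK e1 e2 lpos
          by (intro convexD) (auto simp: l_def add_divide_distrib[symmetric])
        have lk0: "l *\<^sub>R k = l1 *\<^sub>R k1 + l2 *\<^sub>R k2"
          unfolding k_def using lpos by (simp add: scaleR_add_right)
        have lk: "l *\<^sub>R (k - x) = l1 *\<^sub>R (k1 - x) + l2 *\<^sub>R (k2 - x)"
          using lk0 by (simp add: algebra_simps l_def)
        have "norm (y1 + y2 - l *\<^sub>R (k - x)) - l * d \<in> S (y1 + y2)"
          unfolding S_def using kK lpos by fastforce
        then have "p (y1 + y2) \<le> norm (y1 + y2 - l *\<^sub>R (k - x)) - l * d" by (rule pl)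
        also have "y1 + y2 - l *\<^sub>R (k - x) = (y1 - l1 *\<^sub>R (k1 - x)) + (y2 - l2 *\<^sub>R (k2 - x))"
          using lk by (simp add: algebra_simps)
        also have "norm \<dots> - l * d \<le> s1 + s2"
          using e1 e2 norm_triangle_ineq[of "y1 - l1 *\<^sub>R (k1 - x)" "y2 - l2 *\<^sub>R (k2 - x)"]
          by (simp add: l_def algebra_simps)
        finally show ?thesis .
      qed
    qed
    then have "p (y1 + y2) - s2 \<le> p y1" if "s2 \<in> S y2" for s2
      using that by (intro pg) (auto simp: algebra_simps)
    then have "p (y1 + y2) - p y1 \<le> p y2" by (intro pg) (auto simp: algebra_simps)
    then show ?thesis by simp
  qed
  have homle: "p (c *\<^sub>R y) \<le> c * p y" if c: "c > 0" for c y
  proof -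
    have "p (c *\<^sub>R y) \<le> c * s" if s: "s \<in> S y" for s
    proof -
      obtain l k where e: "s = norm (y - l *\<^sub>R (k - x)) - l * d" "l \<ge> 0" "k \<in> K"
        using s unfolding S_def by blast
      have "norm (c *\<^sub>R y - (c * l) *\<^sub>R (k - x)) - (c * l) * d \<in> S (c *\<^sub>R y)"
        unfolding S_def using e c by fastforce
      then have "p (c *\<^sub>R y) \<le> norm (c *\<^sub>R y - (c * l) *\<^sub>R (k - x)) - (c * l) * d" by (rule pl)
      also have "c *\<^sub>R y - (c * l) *\<^sub>R (k - x) = c *\<^sub>R (y - l *\<^sub>R (k - x))" by (simp add: algebra_simps)
      also have "norm (c *\<^sub>R (y - l *\<^sub>R (k - x))) = c * norm (y - l *\<^sub>R (k - x))" using c by simp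
      also have "c * norm (y - l *\<^sub>R (k - x)) - (c * l) * d = c * s" using e(1) by (simp add: right_diff_distrib)
      finally show ?thesis .
    qed
    then have "p (c *\<^sub>R y) / c \<le> p y" using c by (intro pg) (simp add: divide_le_eq mult.commute)
    then show ?thesis using c by (simp add: divide_le_eq mult.commute)
  qed
  have hom: "p (c *\<^sub>R y) = c * p y" if c: "c > 0" for c y
  proof -
    have "p y = p ((1/c) *\<^sub>R (c *\<^sub>R y))" using c by simp
    also have "\<dots> \<le> (1/c) * p (c *\<^sub>R y)" using c by (intro homle) auto
    finally have "c * p y \<le> p (c *\<^sub>R y)" using c by (simp add: field_simps)
    then show ?thesis using homle[OF c, of y] by linarith
  qed
  obtain f where fadd: "\<And>x y. f (x + y) = f x + f y" and fsc: "\<And>r x. f (r *\<^sub>R x) = r * f x"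
    and fp: "\<And>x. f x \<le> p x"
    using hb[of p, OF sub hom] by blast
  have fn: "\<bar>f y\<bar> \<le> norm y" for y
  proof -
    have "f y \<le> norm y" using fp[of y] pnorm[of y] by simp
    moreover have "- f y \<le> norm y" using fp[of "-y"] pnorm[of "-y"] fsc[of "-1" y] by simp
    ultimately show ?thesis by simp
  qed
  have bl: "bounded_linear f"
    by (rule bounded_linear_intro[of f 1]) (use fadd fsc fn in auto)
  define h where "h = Blinfun f"
  have happ: "blinfun_apply h = f" unfolding h_def using bl by (simp add: bounded_linear_Blinfun_apply)
  have "norm h \<le> 1" by (rule norm_blinfun_bound) (use fn happ in auto)
  moreover have "blinfun_apply h k \<le> blinfun_apply h x - d" if k: "k \<in> K" for k
  proof -
    have "norm ((k - x) - 1 *\<^sub>R (k - x)) - 1 * d \<in> S (k - x)" unfolding S_def using k by fastforce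
    then have "p (k - x) \<le> - d" using pl by fastforce
    moreover have "f (k - x) = f k - f x" using fadd[of "k - x" x] by simp
    ultimately show ?thesis using fp[of "k - x"] happ by simp
  qed
  ultimately show ?thesis by blast
qed


lemma half_closure:
  fixes h :: "'a::real_normed_vector \<Rightarrow>\<^sub>L real"
  assumes "\<forall>s\<in>S. blinfun_apply h s \<le> t"
  shows "closure (convex hull S) \<subseteq> {y. blinfun_apply h y \<le> t}"
proof -
  have cv: "convex {y. blinfun_apply h y \<le> t}"
  proof (rule convexI)
    fix x y and u v :: real assume xy: "x \<in> {y. blinfun_apply h y \<le> t}" "y \<in> {y. blinfun_apply h y \<le> t}"
      and uv: "0 \<le> u" "0 \<le> v" "u + v = 1"
    have "blinfun_apply h (u *\<^sub>R x + v *\<^sub>R y) = u * blinfun_apply h x + v * blinfun_apply h y"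
      by (simp add: blinfun.add_right blinfun.scaleR_right)
    also have "\<dots> \<le> u * t + v * t" using xy uv by (intro add_mono mult_left_mono) auto
    also have "\<dots> = t" using uv by (simp add: distrib_right[symmetric])
    finally show "u *\<^sub>R x + v *\<^sub>R y \<in> {y. blinfun_apply h y \<le> t}" by simp
  qed
  have cl: "closed {y. blinfun_apply h y \<le> t}"
    by (intro closed_Collect_le continuous_intros)
  have "convex hull S \<subseteq> {y. blinfun_apply h y \<le> t}"
    by (rule hull_minimal) (use assms cv in auto)
  then show ?thesis using cl by (rule closure_minimal)
qed

lemma bdd_h:
  fixes h :: "'a::real_normed_vector \<Rightarrow>\<^sub>L real"
  assumes "bounded C"
  shows "bdd_above (blinfun_apply h ` C)"
  using bounded_linear_image[OF assms blinfun.bounded_linear_right] by (rule bounded_imp_bdd_above)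

lemma sup_eq:
  fixes h :: "'a::real_normed_vector \<Rightarrow>\<^sub>L real"
  assumes "bounded A" "A \<noteq> {}"
  shows "(SUP x\<in>closure (convex hull A). blinfun_apply h x) = (SUP x\<in>A. blinfun_apply h x)"
proof -
  have bC: "bounded (closure (convex hull A))" using bounded_closure[OF bounded_convex_hull[OF assms(1)]] .
  have AC: "A \<subseteq> closure (convex hull A)" using hull_subset[of A convex] closure_subset[of "convex hull A"] by (rule subset_trans)
  have "\<forall>s\<in>A. blinfun_apply h s \<le> (SUP x\<in>A. blinfun_apply h x)"
  proof
    fix s assume "s \<in> A"
    then show "blinfun_apply h s \<le> (SUP x\<in>A. blinfun_apply h x)"
      using bdd_h[OF assms(1), of h] by (rule cSUP_upper)
  qed
  from half_closure[OF this] have le: "\<forall>c\<in>closure (convex hull A). blinfun_apply h c \<le> (SUP x\<in>A. blinfun_apply h x)"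
    by (simp add: subset_iff)
  show ?thesis
  proof (rule antisym)
    show "(SUP x\<in>closure (convex hull A). blinfun_apply h x) \<le> (SUP x\<in>A. blinfun_apply h x)"
    proof (rule cSUP_least)
      show "closure (convex hull A) \<noteq> {}" using AC assms(2) by (metis subset_empty)
    next
      fix x assume "x \<in> closure (convex hull A)"
      then show "blinfun_apply h x \<le> (SUP x\<in>A. blinfun_apply h x)" using le by blast
    qed
    show "(SUP x\<in>A. blinfun_apply h x) \<le> (SUP x\<in>closure (convex hull A). blinfun_apply h x)"
    proof (rule cSUP_least)
      show "A \<noteq> {}" using assms(2) .
    next
      fix x assume "x \<in> A"
      then have "x \<in> closure (convex hull A)" using AC by (simp add: subset_iff)
      then show "blinfun_apply h x \<le> (SUP x\<in>closure (convex hull A). blinfun_apply h x)"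
        using bdd_h[OF bC] by (rule cSUP_upper)
    qed
  qed
qed

lemma sep_slice:
  fixes C W :: "'a::real_normed_vector set"
  assumes bC: "bounded C" and xC: "x \<in> C" and xW: "x \<notin> closure (convex hull W)"
  shows "\<exists>h \<beta>. norm h \<le> 1 \<and> \<beta> > 0 \<and> x \<in> slice h C \<beta> \<and>
     (\<forall>w\<in>W. blinfun_apply h w \<le> (SUP c\<in>C. blinfun_apply h c) - \<beta>)"
proof -
  have "\<not> (\<forall>e>0. \<exists>y\<in>convex hull W. dist y x < e)" using xW closure_approachable by blast
  then obtain e where e: "e > 0" "\<forall>y\<in>convex hull W. e \<le> dist y x"
    by (auto simp: not_less)
  have far: "\<forall>k\<in>convex hull W. e \<le> norm (k - x)" using e by (simp add: dist_norm)
  obtain h where h: "norm h \<le> 1" "\<forall>k\<in>convex hull W. blinfun_apply h k \<le> blinfun_apply h x - e"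
    using sep[OF convex_convex_hull e(1) far] by blast
  define M where "M = (SUP c\<in>C. blinfun_apply h c)"
  have hxM: "blinfun_apply h x \<le> M" unfolding M_def using xC bdd_h[OF bC] by (rule cSUP_upper)
  define \<beta> where "\<beta> = M - (blinfun_apply h x - e)"
  have "\<beta> > 0" unfolding \<beta>_def using hxM e by simp
  moreover have "x \<in> slice h C \<beta>" unfolding slice_def \<beta>_def M_def[symmetric] using xC e by simp
  moreover have "\<forall>w\<in>W. blinfun_apply h w \<le> M - \<beta>"
  proof
    fix w assume "w \<in> W"
    then have "w \<in> convex hull W" by (rule hull_inc)
    then show "blinfun_apply h w \<le> M - \<beta>" using h(2) unfolding \<beta>_def by simp
  qed
  ultimately show ?thesis using h(1) unfolding M_def by (intro exI[of _ h] exI[of _ \<beta>]) simp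
qed


lemma core:
  fixes C X W :: "'a::real_normed_vector set" and h :: "'a \<Rightarrow>\<^sub>L real"
  assumes bC: "bounded C" and XC: "X \<subseteq> C" and WC: "W \<subseteq> C"
    and CXW: "C \<subseteq> closure (convex hull (X \<union> W))"
    and nh: "norm h \<le> 1" and \<Delta>: "\<Delta> > 0"
    and hW: "\<forall>w\<in>W. blinfun_apply h w \<le> M - \<Delta>" and hX: "\<forall>x\<in>X. blinfun_apply h x \<le> M"
    and bX: "bounded X" and dX: "diameter X \<le> e" and ee: "e < \<epsilon>"
  shows "\<exists>\<beta>>0. \<forall>x\<in>C. \<forall>y\<in>C. blinfun_apply h x > M - \<beta> \<longrightarrow> blinfun_apply h y > M - \<beta> \<longrightarrow> dist x y \<le> \<epsilon>"
proof -
  have e0: "0 \<le> e" using diameter_ge_0[OF bX] dX by linarith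
  obtain B where B: "B > 0" "\<forall>c\<in>C. norm c \<le> B" using bC unfolding bounded_pos by blast
  define R where "R = max B \<epsilon>"
  have R: "R > 0" "\<epsilon> \<le> R" "\<forall>c\<in>C. norm c \<le> R" using B unfolding R_def by (auto simp: le_max_iff_disj)
  define K where "K = 2 * R / \<Delta>"
  have K: "K > 0" unfolding K_def using R \<Delta> by simp
  define \<beta> where "\<beta> = \<Delta> * (\<epsilon> - e) / (4 * R)"
  have \<beta>pos: "\<beta> > 0" unfolding \<beta>_def using R \<Delta> ee by simp
  have "\<epsilon> - e \<le> 4 * R" using R e0 by simp
  then have "\<Delta> * (\<epsilon> - e) \<le> \<Delta> * (4 * R)" using \<Delta> by (intro mult_left_mono) auto
  then have \<beta>\<Delta>: "\<beta> \<le> \<Delta>" unfolding \<beta>_def using R by (simp add: divide_le_eq)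
  have K\<beta>: "K * \<beta> = (\<epsilon> - e) / 2" unfolding K_def \<beta>_def using R \<Delta> by (simp add: field_simps)
  have hab: "\<bar>blinfun_apply h a - blinfun_apply h b\<bar> \<le> dist a b" for a b
  proof -
    have "\<bar>blinfun_apply h a - blinfun_apply h b\<bar> = norm (blinfun_apply h (a - b))"
      by (simp add: blinfun.diff_right)
    also have "\<dots> \<le> norm h * norm (a - b)" by (rule norm_blinfun)
    also have "\<dots> \<le> 1 * norm (a - b)" using nh by (intro mult_right_mono) auto
    finally show ?thesis by (simp add: dist_norm)
  qed
  show ?thesis
  proof (cases "X = {}")
    case True
    then have "\<forall>s\<in>W. blinfun_apply h s \<le> M - \<Delta>" using hW by simp
    from half_closure[OF this] have "C \<subseteq> {y. blinfun_apply h y \<le> M - \<Delta>}"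
      using CXW True by simp
    then have "\<forall>x\<in>C. \<not> blinfun_apply h x > M - \<beta>" using \<beta>\<Delta> by (force simp: subset_iff)
    then show ?thesis using \<beta>pos by blast
  next
    case False
    then obtain x0 where x0: "x0 \<in> X" by auto
    define Q where "Q = {c. \<exists>u\<in>convex hull X. norm (c - u) \<le> K * (M - blinfun_apply h c)}"
    have cQ: "convex Q"
    proof (rule convexI)
      fix c1 c2 and u v :: real assume c1: "c1 \<in> Q" and c2: "c2 \<in> Q" and uv: "0 \<le> u" "0 \<le> v" "u + v = 1"
      obtain u1 where u1: "u1 \<in> convex hull X" "norm (c1 - u1) \<le> K * (M - blinfun_apply h c1)"
        using c1 unfolding Q_def by blast
      obtain u2 where u2: "u2 \<in> convex hull X" "norm (c2 - u2) \<le> K * (M - blinfun_apply h c2)"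
        using c2 unfolding Q_def by blast
      have uu: "u *\<^sub>R u1 + v *\<^sub>R u2 \<in> convex hull X"
        using convexD[OF convex_convex_hull u1(1) u2(1) uv] .
      have eq: "(u *\<^sub>R c1 + v *\<^sub>R c2) - (u *\<^sub>R u1 + v *\<^sub>R u2) = u *\<^sub>R (c1 - u1) + v *\<^sub>R (c2 - u2)"
        by (simp add: algebra_simps)
      have "norm ((u *\<^sub>R c1 + v *\<^sub>R c2) - (u *\<^sub>R u1 + v *\<^sub>R u2)) \<le> norm (u *\<^sub>R (c1 - u1)) + norm (v *\<^sub>R (c2 - u2))"
        unfolding eq by (rule norm_triangle_ineq)
      also have "\<dots> = u * norm (c1 - u1) + v * norm (c2 - u2)" using uv by simp
      also have "\<dots> \<le> u * (K * (M - blinfun_apply h c1)) + v * (K * (M - blinfun_apply h c2))"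
        using uv u1 u2 by (intro add_mono mult_left_mono) auto
      also have "\<dots> = K * (M - blinfun_apply h (u *\<^sub>R c1 + v *\<^sub>R c2))"
      proof -
        have "blinfun_apply h (u *\<^sub>R c1 + v *\<^sub>R c2) = u * blinfun_apply h c1 + v * blinfun_apply h c2"
          by (simp add: blinfun.add_right blinfun.scaleR_right)
        moreover have "u * (K * (M - a)) + v * (K * (M - b)) = K * ((u + v) * M - (u * a + v * b))" for a b
          by (simp add: algebra_simps)
        ultimately show ?thesis using uv(3) by simp
      qed
      finally show "u *\<^sub>R c1 + v *\<^sub>R c2 \<in> Q" unfolding Q_def using uu by blast
    qed
    have XQ: "X \<subseteq> Q"
    proof
      fix x assume x: "x \<in> X"
      have "x \<in> convex hull X" using x by (rule hull_inc)
      moreover have "norm (x - x) \<le> K * (M - blinfun_apply h x)" using K hX x by simp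
      ultimately show "x \<in> Q" unfolding Q_def by blast
    qed
    have WQ: "W \<subseteq> Q"
    proof
      fix w assume w: "w \<in> W"
      have "x0 \<in> convex hull X" using x0 by (rule hull_inc)
      moreover have "norm (w - x0) \<le> K * (M - blinfun_apply h w)"
      proof -
        have "norm (w - x0) \<le> norm w + norm x0" by (rule norm_triangle_ineq4)
        also have "\<dots> \<le> R + R" using R(3) w WC x0 XC by (intro add_mono) auto
        also have "\<dots> = K * \<Delta>" unfolding K_def using \<Delta> by simp
        also have "\<dots> \<le> K * (M - blinfun_apply h w)" using K hW w by (intro mult_left_mono) auto
        finally show ?thesis .
      qed
      ultimately show "w \<in> Q" unfolding Q_def by blast
    qed
    have XWQ: "X \<union> W \<subseteq> Q" using XQ WQ by (rule Un_least)
    have hQ: "convex hull (X \<union> W) \<subseteq> Q" using XWQ cQ by (rule hull_minimal)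
    have pX: "dist a b \<le> e" if "a \<in> X" "b \<in> X" for a b
      using diameter_bounded_bound[OF bX that] dX by linarith
    have s1: "convex hull X \<subseteq> cball a e" if a: "a \<in> X" for a
    proof (rule hull_minimal)
      show "X \<subseteq> cball a e" using pX[OF a] by (auto simp: subset_iff)
    qed (rule convex_cball)
    have dco: "dist u u' \<le> e" if u: "u \<in> convex hull X" and u': "u' \<in> convex hull X" for u u'
    proof -
      have "X \<subseteq> cball u e"
      proof
        fix a assume a: "a \<in> X"
        have "u \<in> cball a e" using s1[OF a] u by (rule subsetD)
        then show "a \<in> cball u e" by (simp add: dist_commute)
      qed
      then have "convex hull X \<subseteq> cball u e" using convex_cball by (rule hull_minimal)
      then show ?thesis using u' by (auto simp: subset_iff)
    qed
    have approx: "\<exists>u\<in>convex hull X. dist x u < \<eta> + (\<epsilon> - e) / 2"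
      if x: "x \<in> C" "blinfun_apply h x > M - \<beta>" and \<eta>: "\<eta> > 0" for x \<eta>
    proof -
      define \<eta>' where "\<eta>' = min \<eta> (blinfun_apply h x - (M - \<beta>))"
      have \<eta>': "\<eta>' > 0" unfolding \<eta>'_def using x \<eta> by simp
      have "x \<in> closure (convex hull (X \<union> W))" using CXW x(1) by (rule subsetD)
      then obtain c where c: "c \<in> convex hull (X \<union> W)" "dist c x < \<eta>'"
        using \<eta>' unfolding closure_approachable by blast
      have "\<bar>blinfun_apply h c - blinfun_apply h x\<bar> < blinfun_apply h x - (M - \<beta>)"
        using hab[of c x] c(2) unfolding \<eta>'_def by linarith
      then have hc: "blinfun_apply h c > M - \<beta>" by linarith
      have "c \<in> Q" using hQ c(1) by (rule subsetD)
      then obtain u where u: "u \<in> convex hull X" "norm (c - u) \<le> K * (M - blinfun_apply h c)"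
        unfolding Q_def by blast
      have "K * (M - blinfun_apply h c) < K * \<beta>" using K hc by (intro mult_strict_left_mono) auto
      then have cu: "dist c u < (\<epsilon> - e) / 2" using u(2) K\<beta> by (simp add: dist_norm)
      have "dist x u \<le> dist x c + dist c u" by (rule dist_triangle)
      also have "\<dots> < \<eta> + (\<epsilon> - e) / 2"
      proof -
        have "dist c x < \<eta>" using c(2) unfolding \<eta>'_def by simp
        then show ?thesis using cu dist_commute[of x c] by linarith
      qed
      finally show ?thesis using u(1) by blast
    qed
    show ?thesis
    proof (intro exI[of _ \<beta>] conjI \<beta>pos ballI impI)
      fix x y assume xC: "x \<in> C" and yC: "y \<in> C" and hx: "M - \<beta> < blinfun_apply h x" and hy: "M - \<beta> < blinfun_apply h y"
      show "dist x y \<le> \<epsilon>"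
      proof (rule ccontr)
        assume "\<not> dist x y \<le> \<epsilon>"
        define \<eta> where "\<eta> = (dist x y - \<epsilon>) / 4"
        have \<eta>: "\<eta> > 0" unfolding \<eta>_def using \<open>\<not> dist x y \<le> \<epsilon>\<close> by simp
        obtain u where u: "u \<in> convex hull X" "dist x u < \<eta> + (\<epsilon> - e) / 2" using approx[OF xC hx \<eta>] by blast
        obtain u' where u': "u' \<in> convex hull X" "dist y u' < \<eta> + (\<epsilon> - e) / 2" using approx[OF yC hy \<eta>] by blast
        have "dist x y \<le> dist x u + dist u y" by (rule dist_triangle)
        also have "dist u y \<le> dist u u' + dist u' y" by (rule dist_triangle)
        finally have "dist x y \<le> dist x u + (dist u u' + dist y u')" by (simp add: dist_commute)
        then show False using u(2) u'(2) dco[OF u(1) u'(1)] \<open>\<not> dist x y \<le> \<epsilon>\<close> unfolding \<eta>_def by argo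
      qed
    qed
  qed
qed


theorem lemma2:
  fixes A D S0 :: "'a::banach set" and \<epsilon> \<gamma> :: real
  assumes "\<epsilon> > 0"
    and "bounded A" and "A \<noteq> {}" and "non_dentable \<epsilon> A"
    and "is_slice S0 (closure (convex hull A))"
    and "D \<subseteq> closure (convex hull A)" and "kuratowski D < \<epsilon>"
    and "0 < \<gamma>" and "\<gamma> < 1"
  shows "closure (convex hull A) =
    closure (convex hull ((closure (convex hull A) - S0) \<union>
      (shallow_union (closure (convex hull A)) S0 D \<gamma> \<inter> A)))"
proof -
  define C where "C = closure (convex hull A)"
  have bC: "bounded C" unfolding C_def using bounded_closure[OF bounded_convex_hull[OF assms(2)]] .
  have AC: "A \<subseteq> C" unfolding C_def
    using hull_subset[of A convex] closure_subset[of "convex hull A"] by (rule subset_trans)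
  have cC: "closed C" unfolding C_def by simp
  have cvC: "convex C" unfolding C_def by (simp add: convex_closure)
  have DC: "D \<subseteq> C" using assms(6) unfolding C_def .
  have supeq: "(SUP x\<in>C. blinfun_apply h x) = (SUP x\<in>A. blinfun_apply h x)" for h :: "'a \<Rightarrow>\<^sub>L real"
    unfolding C_def by (rule sup_eq[OF assms(2,3)])
  have sliceC: "slice h C b \<subseteq> C" for h :: "'a \<Rightarrow>\<^sub>L real" and b unfolding slice_def by auto
  have smono: "slice h C b1 \<subseteq> slice h C b2" if "b1 \<le> b2" for h :: "'a \<Rightarrow>\<^sub>L real" and b1 b2
    unfolding slice_def using that by auto
  have hitA: "\<exists>a\<in>A. a \<in> slice h C b" if b: "b > 0" for h :: "'a \<Rightarrow>\<^sub>L real" and b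
  proof -
    have "(SUP x\<in>A. blinfun_apply h x) - b < (SUP x\<in>A. blinfun_apply h x)" using b by simp
    then obtain a where a: "a \<in> A" "(SUP x\<in>A. blinfun_apply h x) - b < blinfun_apply h a"
      using less_cSUP_iff[OF assms(3) bdd_h[OF assms(2)]] by blast
    have "a \<in> C" using AC a(1) by (rule subsetD)
    then have "a \<in> slice h C b" unfolding slice_def using a(2) supeq[of h] by simp
    then show ?thesis using a(1) by blast
  qed
  define \<Lambda> where "\<Lambda> = shallow_union C S0 D \<gamma>"
  define W0 where "W0 = (C - S0) \<union> (\<Lambda> \<inter> A)"
  have \<Lambda>C: "\<Lambda> \<subseteq> C" unfolding \<Lambda>_def shallow_union_def slice_def by auto
  have W0C: "W0 \<subseteq> C" unfolding W0_def using \<Lambda>C by blast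
  have sub1: "closure (convex hull W0) \<subseteq> C"
  proof -
    have "convex hull W0 \<subseteq> C" using W0C cvC by (rule hull_minimal)
    then show ?thesis using cC by (rule closure_minimal)
  qed
  have sub2: "C \<subseteq> closure (convex hull W0)"
  proof
    fix x assume xC: "x \<in> C"
    show "x \<in> closure (convex hull W0)"
    proof (rule ccontr)
      assume xW: "x \<notin> closure (convex hull W0)"
      obtain h \<beta> where h: "norm h \<le> 1" "\<beta> > 0" "x \<in> slice h C \<beta>"
        "\<forall>w\<in>W0. blinfun_apply h w \<le> (SUP c\<in>C. blinfun_apply h c) - \<beta>"
        using sep_slice[OF bC xC xW] by blast
      define T where "T = slice h C \<beta>"
      have TW0: "c \<notin> W0" if c: "c \<in> T" for c
      proof
        assume "c \<in> W0"
        then have "blinfun_apply h c \<le> (SUP c\<in>C. blinfun_apply h c) - \<beta>" using h(4) by blast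
        then show False using c unfolding T_def slice_def by simp
      qed
      have TC: "T \<subseteq> C" unfolding T_def by (rule sliceC)
      have TS0: "T \<subseteq> S0"
      proof
        fix c assume c: "c \<in> T"
        then have "c \<notin> C - S0" using TW0[OF c] unfolding W0_def by blast
        then show "c \<in> S0" using TC c by blast
      qed
      have claim: "\<exists>g \<beta>'. norm g \<le> 1 \<and> \<beta>' > 0 \<and> slice g C \<beta>' \<subseteq> T - D"
      proof (rule ccontr)
        assume ncl: "\<not> (\<exists>g \<beta>'. norm g \<le> 1 \<and> \<beta>' > 0 \<and> slice g C \<beta>' \<subseteq> T - D)"
        define W1 where "W1 = (C - T) \<union> (D \<inter> T)"
        have CW1: "C \<subseteq> closure (convex hull W1)"
        proof
          fix y assume yC: "y \<in> C"
          show "y \<in> closure (convex hull W1)"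
          proof (rule ccontr)
            assume yW: "y \<notin> closure (convex hull W1)"
            obtain g \<beta>' where g: "norm g \<le> 1" "\<beta>' > 0" "y \<in> slice g C \<beta>'"
              "\<forall>w\<in>W1. blinfun_apply g w \<le> (SUP c\<in>C. blinfun_apply g c) - \<beta>'"
              using sep_slice[OF bC yC yW] by blast
            have "slice g C \<beta>' \<subseteq> T - D"
            proof
              fix c assume c: "c \<in> slice g C \<beta>'"
              then have cC: "c \<in> C" and gc: "blinfun_apply g c > (SUP c\<in>C. blinfun_apply g c) - \<beta>'"
                unfolding slice_def by auto
              have "c \<notin> W1"
              proof
                assume "c \<in> W1"
                then have "blinfun_apply g c \<le> (SUP c\<in>C. blinfun_apply g c) - \<beta>'" using g(4) by blast
                then show False using gc by simp
              qed
              then show "c \<in> T - D" using cC unfolding W1_def by blast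
            qed
            then show False using ncl g(1,2) by blast
          qed
        qed
        define E where "E = {e. e > 0 \<and> (\<exists>F. finite F \<and> D \<subseteq> \<Union>F \<and> (\<forall>T\<in>F. bounded T \<and> diameter T \<le> e))}"
        have bD: "bounded D" using bC DC by (rule bounded_subset)
        have "diameter D + 1 \<in> E" unfolding E_def using bD diameter_ge_0[OF bD]
          by (intro CollectI conjI exI[of _ "{D}"]) auto
        then have Ene: "E \<noteq> {}" by blast
        have "Inf E < \<epsilon>" using assms(7) unfolding kuratowski_def E_def .
        then obtain e where "e \<in> E" "e < \<epsilon>" using cInf_lessD[OF Ene] by blast
        then obtain F where e: "e > 0" "e < \<epsilon>" and F: "finite F" "D \<subseteq> \<Union>F"
          "\<forall>X\<in>F. bounded X \<and> diameter X \<le> e" unfolding E_def by blast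
        define F2 where "F2 = (\<lambda>X. X \<inter> (D \<inter> T)) ` F"
        have ind: "finite G \<Longrightarrow> (\<forall>X\<in>G. X \<subseteq> C \<and> bounded X \<and> diameter X \<le> e) \<Longrightarrow>
            C \<subseteq> closure (convex hull ((C - T) \<union> \<Union>G)) \<Longrightarrow> False" for G
        proof (induction G rule: finite_induct)
          case empty
          have "\<forall>s\<in>C - T. blinfun_apply h s \<le> (SUP c\<in>C. blinfun_apply h c) - \<beta>"
            unfolding T_def slice_def by auto
          from half_closure[OF this]
          have "closure (convex hull (C - T)) \<subseteq> {y. blinfun_apply h y \<le> (SUP c\<in>C. blinfun_apply h c) - \<beta>}" .
          moreover have "x \<in> closure (convex hull (C - T))"
          proof -
            have "C \<subseteq> closure (convex hull (C - T))" using empty.prems(2) by simp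
            then show ?thesis using xC by (rule subsetD)
          qed
          ultimately have "blinfun_apply h x \<le> (SUP c\<in>C. blinfun_apply h c) - \<beta>" by blast
          then show False using h(3) unfolding slice_def by simp
        next
          case (insert X G)
          show False
          proof (cases "C \<subseteq> closure (convex hull ((C - T) \<union> \<Union>G))")
            case True
            then show False using insert.IH insert.prems(1) by blast
          next
            case False
            then obtain z where zC: "z \<in> C" and zW: "z \<notin> closure (convex hull ((C - T) \<union> \<Union>G))"
              by blast
            obtain h2 \<beta>2 where h2: "norm h2 \<le> 1" "\<beta>2 > 0" "z \<in> slice h2 C \<beta>2"
              "\<forall>w\<in>(C - T) \<union> \<Union>G. blinfun_apply h2 w \<le> (SUP c\<in>C. blinfun_apply h2 c) - \<beta>2"
              using sep_slice[OF bC zC zW] by blast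
            have XC: "X \<subseteq> C" "bounded X" "diameter X \<le> e" using insert.prems(1) by auto
            have W'C: "(C - T) \<union> \<Union>G \<subseteq> C" using insert.prems(1) by auto
            have eq: "X \<union> ((C - T) \<union> \<Union>G) = (C - T) \<union> \<Union>(insert X G)" by auto
            have CXW: "C \<subseteq> closure (convex hull (X \<union> ((C - T) \<union> \<Union>G)))"
              unfolding eq using insert.prems(2) .
            have hX: "\<forall>x\<in>X. blinfun_apply h2 x \<le> (SUP c\<in>C. blinfun_apply h2 c)"
            proof
              fix x assume "x \<in> X"
              then have "x \<in> C" using XC(1) by blast
              then show "blinfun_apply h2 x \<le> (SUP c\<in>C. blinfun_apply h2 c)"
                using bdd_h[OF bC] by (rule cSUP_upper)
            qed
            obtain \<beta>3 where \<beta>3: "\<beta>3 > 0" "\<forall>x\<in>C. \<forall>y\<in>C. blinfun_apply h2 x > (SUP c\<in>C. blinfun_apply h2 c) - \<beta>3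
                \<longrightarrow> blinfun_apply h2 y > (SUP c\<in>C. blinfun_apply h2 c) - \<beta>3 \<longrightarrow> dist x y \<le> \<epsilon>"
              using core[OF bC XC(1) W'C CXW h2(1) h2(2) h2(4) hX XC(2) XC(3) e(2)] by blast
            define Sl where "Sl = slice h2 A \<beta>3"
            have "is_slice Sl A" unfolding is_slice_def Sl_def using h2(1) \<beta>3(1) by blast
            then have "diameter Sl > \<epsilon>" using assms(4) unfolding non_dentable_def by blast
            moreover have "diameter Sl \<le> \<epsilon>"
            proof (rule diameter_le)
              show "Sl \<noteq> {} \<or> 0 \<le> \<epsilon>" using assms(1) by simp
            next
              fix a b assume ab: "a \<in> Sl" "b \<in> Sl"
              then have "a \<in> A" "b \<in> A" unfolding Sl_def slice_def by auto
              then have abC: "a \<in> C" "b \<in> C" using AC by (auto simp: subset_iff)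
              have "blinfun_apply h2 a > (SUP c\<in>C. blinfun_apply h2 c) - \<beta>3"
                "blinfun_apply h2 b > (SUP c\<in>C. blinfun_apply h2 c) - \<beta>3"
                using ab unfolding Sl_def slice_def supeq[of h2] by auto
              then have "dist a b \<le> \<epsilon>" using \<beta>3(2) abC by blast
              then show "norm (a - b) \<le> \<epsilon>" by (simp add: dist_norm)
            qed
            ultimately show False by simp
          qed
        qed
        have "finite F2" unfolding F2_def using F(1) by simp
        moreover have "\<forall>X\<in>F2. X \<subseteq> C \<and> bounded X \<and> diameter X \<le> e"
        proof
          fix X assume "X \<in> F2"
          then obtain Y where Y: "Y \<in> F" "X = Y \<inter> (D \<inter> T)" unfolding F2_def by blast
          have XY: "X \<subseteq> Y" using Y(2) by blast
          have bY: "bounded Y" using F(3) Y(1) by blast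
          have "X \<subseteq> C" using Y(2) DC by blast
          moreover have "bounded X" using bY XY by (rule bounded_subset)
          moreover have "diameter X \<le> e"
            using diameter_subset[OF XY bY] F(3) Y(1) by fastforce
          ultimately show "X \<subseteq> C \<and> bounded X \<and> diameter X \<le> e" by blast
        qed
        moreover have "C \<subseteq> closure (convex hull ((C - T) \<union> \<Union>F2))"
        proof -
          have "(C - T) \<union> \<Union>F2 = W1" unfolding W1_def F2_def using F(2) by blast
          then show ?thesis using CW1 by simp
        qed
        ultimately show False using ind by blast
      qed
      then obtain g \<beta>' where g: "norm g \<le> 1" "\<beta>' > 0" "slice g C \<beta>' \<subseteq> T - D" by blast
      have gp: "\<gamma> * \<beta>' / 2 > 0" using assms(8) g(2) by simp
      obtain a where a: "a \<in> A" "a \<in> slice g C (\<gamma> * \<beta>' / 2)" using hitA[OF gp] by blast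
      have gS0: "slice g C \<beta>' \<subseteq> S0 - D" using g(3) TS0 by blast
      have "slice g C (\<gamma> * \<beta>' / 2) \<in> {slice f C (\<gamma> * \<delta> / 2) | f \<delta>. norm f \<le> 1 \<and> \<delta> > 0 \<and> slice f C \<delta> \<subseteq> S0 - D}"
        using g(1,2) gS0 by blast
      then have "slice g C (\<gamma> * \<beta>' / 2) \<subseteq> \<Lambda>" unfolding \<Lambda>_def shallow_union_def by (rule Union_upper)
      then have aL: "a \<in> \<Lambda>" using a(2) by blast
      have "\<gamma> * \<beta>' \<le> 1 * \<beta>'" using assms(9) g(2) by (intro mult_right_mono) auto
      then have "\<gamma> * \<beta>' / 2 \<le> \<beta>'" using g(2) by simp
      then have "a \<in> slice g C \<beta>'" using smono a(2) by blast
      then have "a \<in> T" using g(3) by blast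
      moreover have "a \<in> W0" unfolding W0_def using aL a(1) by blast
      ultimately show False using TW0 by blast
    qed
  qed
  have eqC: "C = closure (convex hull W0)" using sub1 sub2 by (rule antisym[rotated])
  show ?thesis using eqC unfolding W0_def \<Lambda>_def C_def .
qed

end
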